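(* Let $\alpha\in(0,1]$, $0\le a<b$, and let $f:[a,b]\to\mathbb{R}$ be $\alpha$-fractional differentiable. If $D_\alpha f$ is increasing on $[a,b]$, then $$ \frac{\alpha}{b^\alpha-a^\alpha}\int_a^b f(t)\,d_\alpha t\le\frac{f(b)+f(a)}{2}. $$ If $D_\alpha f$ is decreasing on $[a,b]$, the inequality is reversed.
   Context: The conformable $\alpha$-fractional derivative is $D_\alpha f(t):=\lim_{\varepsilon\to 0}\frac{f(t+\varepsilon t^{1-\alpha})-f(t)}{\varepsilon}$ for $t>0$, $D_\alpha f(0):=\lim_{t\to0^+}D_\alpha f(t)$. Integrals: $\int_a^b h(t)\,d_\alpha t:=\int_a^b h(t)t^{\alpha-1}\,dt$. *)

theory Defs
  imports "HOL-Analysis.Analysis"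
begin

definition conf_quot :: "real \<Rightarrow> (real \<Rightarrow> real) \<Rightarrow> real \<Rightarrow> real \<Rightarrow> real" where
  "conf_quot \<alpha> f t \<epsilon> = (f (t + \<epsilon> * t powr (1 - \<alpha>)) - f t) / \<epsilon>"

text \<open>For t > 0 in [a,b]: D is the alpha-derivative of f (restricted to [a,b]) at t;
  the limit is taken over increments keeping the argument in [a,b]
  (one-sided at the endpoints).\<close>
definition conf_has_deriv :: "real \<Rightarrow> (real \<Rightarrow> real) \<Rightarrow> real \<Rightarrow> real \<Rightarrow> real \<Rightarrow> real \<Rightarrow> bool" where
  "conf_has_deriv \<alpha> f a b t D \<longleftrightarrow>
     (conf_quot \<alpha> f t \<longlongrightarrow> D) (at 0 within {\<epsilon>. t + \<epsilon> * t powr (1 - \<alpha>) \<in> {a..b}})"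

definition conf_deriv :: "real \<Rightarrow> (real \<Rightarrow> real) \<Rightarrow> real \<Rightarrow> real \<Rightarrow> real \<Rightarrow> real" where
  "conf_deriv \<alpha> f a b t =
     (if t > 0 then (THE D. conf_has_deriv \<alpha> f a b t D)
      else Lim (at_right 0) (\<lambda>s. THE D. conf_has_deriv \<alpha> f a b s D))"

definition conf_differentiable_on :: "real \<Rightarrow> (real \<Rightarrow> real) \<Rightarrow> real \<Rightarrow> real \<Rightarrow> bool" where
  "conf_differentiable_on \<alpha> f a b \<longleftrightarrow>
     continuous_on {a..b} f \<and>
     (\<forall>t\<in>{a..b}. t > 0 \<longrightarrow> (\<exists>D. conf_has_deriv \<alpha> f a b t D)) \<and>
     (a = 0 \<longrightarrow> (\<exists>L. ((\<lambda>s. THE D. conf_has_deriv \<alpha> f a b s D) \<longlongrightarrow> L) (at_right 0)))"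

definition conf_integral :: "real \<Rightarrow> (real \<Rightarrow> real) \<Rightarrow> real \<Rightarrow> real \<Rightarrow> real" where
  "conf_integral \<alpha> h a b = integral {a..b} (\<lambda>t. h t * t powr (\<alpha> - 1))"

end

theory Submission
  imports Defs
begin

lemma conf_interior:
  assumes al: "0 < \<alpha>" and t: "a < t" "t < b" "0 \<le> a"
    and D: "conf_has_deriv \<alpha> f a b t D"
  shows "(f has_real_derivative D * t powr (\<alpha> - 1)) (at t)"
    and "conf_deriv \<alpha> f a b t = D"
proof -
  define c where "c = t powr (1 - \<alpha>)"
  have tpos: "t > 0" using t by linarith
  have cpos: "c > 0" unfolding c_def using tpos by simp
  define S where "S = {\<epsilon>. t + \<epsilon> * c \<in> {a..b}}"
  have sub: "{(a - t)/c <..< (b - t)/c} \<subseteq> S"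
  proof
    fix e assume "e \<in> {(a - t)/c <..< (b - t)/c}"
    hence "(a - t)/c < e" "e < (b-t)/c" by auto
    hence "a - t < e * c" "e * c < b - t" using cpos by (auto simp: field_simps)
    thus "e \<in> S" unfolding S_def by auto
  qed
  have "0 \<in> {(a - t)/c <..< (b - t)/c}" using t cpos by (auto simp: field_simps)
  hence "0 \<in> interior S" using interior_maximal[OF sub] by auto
  hence atS: "at 0 within S = at 0" by (rule at_within_interior)
  have lim: "(conf_quot \<alpha> f t \<longlongrightarrow> D) (at 0)"
    using D unfolding conf_has_deriv_def S_def[symmetric] c_def[symmetric] atS .
  have fl: "filterlim (\<lambda>h. h / c) (at 0) (at 0)"
    unfolding filterlim_at using cpos
    by (auto intro!: tendsto_eq_intros simp: eventually_at_filter)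
  have "((\<lambda>h. conf_quot \<alpha> f t (h / c) / c) \<longlongrightarrow> D / c) (at 0)"
    using filterlim_compose[OF lim fl] cpos by (intro tendsto_divide) (auto simp: o_def)
  moreover have "(\<lambda>h. conf_quot \<alpha> f t (h / c) / c) = (\<lambda>h. (f (t + h) - f t) / h)"
    using cpos by (auto simp: conf_quot_def c_def[symmetric] fun_eq_iff)
  moreover have "D / c = D * t powr (\<alpha> - 1)"
  proof -
    have "inverse (t powr (1-\<alpha>)) = t powr (\<alpha>-1)" by (metis minus_diff_eq powr_minus)
    thus ?thesis unfolding c_def divide_inverse by (simp only:)
  qed
  ultimately show "(f has_real_derivative D * t powr (\<alpha> - 1)) (at t)"
    unfolding DERIV_def by simp
  have uniq: "\<And>D'. conf_has_deriv \<alpha> f a b t D' \<Longrightarrow> D' = D"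
  proof -
    fix D' assume "conf_has_deriv \<alpha> f a b t D'"
    hence "(conf_quot \<alpha> f t \<longlongrightarrow> D') (at 0)"
      unfolding conf_has_deriv_def S_def[symmetric] c_def[symmetric] atS .
    thus "D' = D" using lim tendsto_unique[OF at_neq_bot] by blast
  qed
  have "(THE D. conf_has_deriv \<alpha> f a b t D) = D"
    by (rule the_equality[of "conf_has_deriv \<alpha> f a b t" D, OF D uniq])
  thus "conf_deriv \<alpha> f a b t = D" unfolding conf_deriv_def using tpos by simp
qed

lemma gen_mvt:
  fixes f u h w :: "real \<Rightarrow> real"
  assumes "x < y" "continuous_on {x..y} f" "continuous_on {x..y} u"
    and df: "\<And>t. t \<in> {x<..<y} \<Longrightarrow> (f has_real_derivative h t * w t) (at t)"
    and du: "\<And>t. t \<in> {x<..<y} \<Longrightarrow> (u has_real_derivative w t) (at t)"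
    and wpos: "\<And>t. t \<in> {x<..<y} \<Longrightarrow> w t > 0"
  shows "\<exists>\<xi>\<in>{x<..<y}. f y - f x = h \<xi> * (u y - u x)"
proof -
  define \<psi> where "\<psi> t = (f t - f x) * (u y - u x) - (u t - u x) * (f y - f x)" for t
  define d where "d t = h t * w t * (u y - u x) - w t * (f y - f x)" for t
  have "continuous_on {x..y} \<psi>" unfolding \<psi>_def using assms(2,3)
    by (intro continuous_intros) auto
  moreover have "(\<psi> has_derivative (*) (d t)) (at t)" if "x < t" "t < y" for t
  proof -
    have "(\<psi> has_real_derivative d t) (at t)" unfolding \<psi>_def d_def
      using df[of t] du[of t] that by (auto intro!: derivative_eq_intros)
    thus ?thesis by (simp add: has_field_derivative_def)
  qed
  ultimately obtain \<xi> where xi: "x < \<xi>" "\<xi> < y" "\<psi> y - \<psi> x = d \<xi> * (y - x)"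
    using mvt[OF assms(1), of \<psi> "\<lambda>t. (*) (d t)"] by blast
  have "\<psi> y - \<psi> x = 0" unfolding \<psi>_def by (simp add: algebra_simps)
  hence "d \<xi> = 0" using xi assms(1) by simp
  hence "w \<xi> * (h \<xi> * (u y - u x) - (f y - f x)) = 0" unfolding d_def by (simp add: algebra_simps)
  hence "h \<xi> * (u y - u x) - (f y - f x) = 0" using wpos[of \<xi>] xi by simp
  thus ?thesis using xi(1,2) by (intro bexI[of _ \<xi>]) auto
qed

lemma core_le:
  fixes f u h w :: "real \<Rightarrow> real"
  assumes ab: "a < b" and cf: "continuous_on {a..b} f" and cu: "continuous_on {a..b} u"
    and df: "\<And>t. t \<in> {a<..<b} \<Longrightarrow> (f has_real_derivative h t * w t) (at t)"
    and du: "\<And>t. t \<in> {a<..<b} \<Longrightarrow> (u has_real_derivative w t) (at t)"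
    and wpos: "\<And>t. t \<in> {a<..<b} \<Longrightarrow> w t > 0"
    and umono: "\<And>x y. a \<le> x \<Longrightarrow> x < y \<Longrightarrow> y \<le> b \<Longrightarrow> u x < u y"
    and hmono: "\<And>x y. a < x \<Longrightarrow> x < y \<Longrightarrow> y < b \<Longrightarrow> h x \<le> h y"
    and t: "t \<in> {a..b}"
  shows "f t \<le> f a + (f b - f a) * (u t - u a) / (u b - u a)"
proof -
  have U: "u b - u a > 0" using umono[of a b] ab by simp
  consider "t = a" | "t = b" | "a < t" "t < b" using t by fastforce
  then show ?thesis
  proof cases
    case 1 thus ?thesis by simp
  next
    case 2 thus ?thesis using U by simp
  next
    case 3
    obtain \<xi> where xi: "\<xi> \<in> {a<..<t}" "f t - f a = h \<xi> * (u t - u a)"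
      using gen_mvt[of a t f u h w] 3 continuous_on_subset[OF cf] continuous_on_subset[OF cu] df du wpos
      by fastforce
    obtain \<eta> where eta: "\<eta> \<in> {t<..<b}" "f b - f t = h \<eta> * (u b - u t)"
      using gen_mvt[of t b f u h w] 3 continuous_on_subset[OF cf] continuous_on_subset[OF cu] df du wpos
      by fastforce
    define p where "p = u t - u a"
    define q where "q = u b - u t"
    have p: "p > 0" unfolding p_def using umono[of a t] 3 by simp
    have q: "q > 0" unfolding q_def using umono[of t b] 3 by simp
    have hle: "h \<xi> \<le> h \<eta>" using hmono[of \<xi> \<eta>] xi eta by simp
    have "h \<xi> * p * q \<le> h \<eta> * q * p"
      using mult_right_mono[OF hle, of "p*q"] p q by (simp add: algebra_simps)
    hence "(f t - f a) * (p + q) \<le> (f b - f a) * p"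
      using xi(2) eta(2) unfolding p_def[symmetric] q_def[symmetric]
      by (simp add: algebra_simps)
    moreover have "u b - u a = p + q" unfolding p_def q_def by simp
    ultimately show ?thesis using p q unfolding p_def[symmetric]
      by (simp add: field_simps)
  qed
qed

lemma integ_ineq:
  fixes f u w :: "real \<Rightarrow> real"
  assumes ab: "a < b" and cf: "continuous_on {a..b} f" and cu: "continuous_on {a..b} u"
    and du: "\<And>t. t \<in> {a<..<b} \<Longrightarrow> (u has_real_derivative w t) (at t)"
    and wnn: "\<And>t. t \<in> {a..b} \<Longrightarrow> w t \<ge> 0"
    and U: "u b - u a > 0"
    and ptw: "\<And>t. t \<in> {a..b} \<Longrightarrow> f t \<le> f a + (f b - f a) * (u t - u a) / (u b - u a)"
  shows "integral {a..b} (\<lambda>t. f t * w t) \<le> (u b - u a) * ((f b + f a) / 2)"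
proof -
  define K where "K = (f b - f a) / (u b - u a)"
  define L where "L t = f a + K * (u t - u a)" for t
  define G where "G t = f a * u t + K * (u t - u a)^2 / 2" for t
  have wint: "(w has_integral (u b - u a)) {a..b}"
    using ab cu du by (intro fundamental_theorem_of_calculus_interior)
      (auto simp: has_real_derivative_iff_has_vector_derivative[symmetric])
  have wabs: "w absolutely_integrable_on {a..b}"
    using wint wnn by (intro nonnegative_absolutely_integrable_1) auto
  have "bounded (f ` {a..b})"
    using compact_continuous_image[OF cf] compact_imp_bounded by auto
  moreover have "f \<in> borel_measurable (lebesgue_on {a..b})"
    using cf by (intro continuous_imp_measurable_on_sets_lebesgue) auto
  ultimately have "(\<lambda>t. f t * w t) absolutely_integrable_on {a..b}"
    using wabs by (intro absolutely_integrable_bounded_measurable_product_real) auto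
  hence fint: "(\<lambda>t. f t * w t) integrable_on {a..b}"
    by (rule set_lebesgue_integral_eq_integral(1))
  have Gint: "((\<lambda>t. L t * w t) has_integral (G b - G a)) {a..b}"
  proof (rule fundamental_theorem_of_calculus_interior)
    show "continuous_on {a..b} G" unfolding G_def using cu by (intro continuous_intros) auto
    fix t assume t: "t \<in> {a<..<b}"
    have "(G has_real_derivative L t * w t) (at t)"
      unfolding G_def L_def using du[OF t]
      by (auto intro!: derivative_eq_intros simp: field_simps power2_eq_square)
    thus "(G has_vector_derivative L t * w t) (at t)"
      by (simp add: has_real_derivative_iff_has_vector_derivative)
  qed (use ab in auto)
  have "integral {a..b} (\<lambda>t. f t * w t) \<le> integral {a..b} (\<lambda>t. L t * w t)"
  proof (rule integral_le[OF fint])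
    show "(\<lambda>t. L t * w t) integrable_on {a..b}" using Gint by blast
    fix t assume t: "t \<in> {a..b}"
    have "f t \<le> L t" using ptw[OF t] unfolding L_def K_def by (simp add: field_simps)
    thus "f t * w t \<le> L t * w t" using wnn[OF t] by (rule mult_right_mono)
  qed
  also have "\<dots> = G b - G a" using Gint by blast
  also have "G b - G a = (u b - u a) * ((f b + f a) / 2)"
    unfolding G_def K_def using U by (simp add: field_simps power2_eq_square)
  finally show ?thesis .
qed

theorem mainTheorem14:
  fixes \<alpha> a b :: real and f :: "real \<Rightarrow> real"
  assumes "0 < \<alpha>" "\<alpha> \<le> 1" "0 \<le> a" "a < b"
    and "conf_differentiable_on \<alpha> f a b"
  shows "(mono_on {a..b} (conf_deriv \<alpha> f a b) \<longrightarrow>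
           \<alpha> / (b powr \<alpha> - a powr \<alpha>) * conf_integral \<alpha> f a b \<le> (f b + f a) / 2) \<and>
         (antimono_on {a..b} (conf_deriv \<alpha> f a b) \<longrightarrow>
           \<alpha> / (b powr \<alpha> - a powr \<alpha>) * conf_integral \<alpha> f a b \<ge> (f b + f a) / 2)"
proof -
  note al = assms(1) and a0 = assms(3) and ab = assms(4)
  define u where "u t = t powr \<alpha> / \<alpha>" for t :: real
  define w where "w t = t powr (\<alpha> - 1)" for t :: real
  define h where "h = conf_deriv \<alpha> f a b"
  have cf: "continuous_on {a..b} f" using assms(5) unfolding conf_differentiable_on_def by blast
  have df: "(f has_real_derivative h t * w t) (at t)" if t: "t \<in> {a<..<b}" for t
  proof -
    have "t \<in> {a..b}" "t > 0" using t a0 by auto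
    then obtain D where D: "conf_has_deriv \<alpha> f a b t D"
      using assms(5) unfolding conf_differentiable_on_def by blast
    show ?thesis using conf_interior[OF al _ _ a0 D] t unfolding h_def w_def by auto
  qed
  have du: "(u has_real_derivative w t) (at t)" if t: "t \<in> {a<..<b}" for t
  proof -
    have "t > 0" using t a0 by auto
    hence "(u has_real_derivative \<alpha> * t powr (\<alpha> - 1) / \<alpha>) (at t)"
      unfolding u_def by (intro DERIV_cdivide has_real_derivative_powr)
    thus ?thesis using al unfolding w_def by simp
  qed
  have wpos: "w t > 0" if "t \<in> {a<..<b}" for t using that a0 unfolding w_def by auto
  have wnn: "w t \<ge> 0" if "t \<in> {a..b}" for t unfolding w_def by simp
  have cu: "continuous_on {a..b} u" unfolding u_def
    using al a0 by (intro continuous_intros continuous_on_powr') auto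
  have umono: "u x < u y" if "a \<le> x" "x < y" "y \<le> b" for x y
    unfolding u_def using that a0 al by (intro divide_strict_right_mono powr_less_mono2) auto
  have U: "u b - u a > 0" using umono[of a b] ab by simp
  have fac: "\<alpha> / (b powr \<alpha> - a powr \<alpha>) = 1 / (u b - u a)"
    unfolding u_def using al by (simp add: field_simps diff_divide_distrib[symmetric])
  have CI: "conf_integral \<alpha> f a b = integral {a..b} (\<lambda>t. f t * w t)"
    unfolding conf_integral_def w_def ..
  show ?thesis
  proof (intro conjI impI)
    assume m: "mono_on {a..b} (conf_deriv \<alpha> f a b)"
    have "\<And>t. t \<in> {a..b} \<Longrightarrow> f t \<le> f a + (f b - f a) * (u t - u a) / (u b - u a)"
      using core_le[OF ab cf cu df du wpos umono] mono_onD[OF m] unfolding h_def by auto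
    from integ_ineq[OF ab cf cu du wnn U this]
    have "integral {a..b} (\<lambda>t. f t * w t) \<le> (u b - u a) * ((f b + f a) / 2)" .
    thus "\<alpha> / (b powr \<alpha> - a powr \<alpha>) * conf_integral \<alpha> f a b \<le> (f b + f a) / 2"
      unfolding fac CI using U by (simp add: field_simps)
  next
    assume m: "antimono_on {a..b} (conf_deriv \<alpha> f a b)"
    have hm: "- h x \<le> - h y" if "a < x" "x < y" "y < b" for x y
      using monotone_onD[OF m, of x y] that unfolding h_def by auto
    have cf': "continuous_on {a..b} (\<lambda>t. - f t)" using cf by (intro continuous_intros)
    have df': "((\<lambda>t. - f t) has_real_derivative (- h t) * w t) (at t)" if "t \<in> {a<..<b}" for t
      using df[OF that] by (auto intro!: derivative_eq_intros)
    have "\<And>t. t \<in> {a..b} \<Longrightarrow> - f t \<le> - f a + (- f b - - f a) * (u t - u a) / (u b - u a)"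
      using core_le[OF ab cf' cu df' du wpos umono hm] by blast
    from integ_ineq[OF ab cf' cu du wnn U this]
    have "integral {a..b} (\<lambda>t. - f t * w t) \<le> (u b - u a) * ((- f b + - f a) / 2)" .
    hence "- integral {a..b} (\<lambda>t. f t * w t) \<le> (u b - u a) * ((- f b + - f a) / 2)"
      using integral_neg[of "{a..b}" "\<lambda>t. f t * w t"] by simp
    thus "\<alpha> / (b powr \<alpha> - a powr \<alpha>) * conf_integral \<alpha> f a b \<ge> (f b + f a) / 2"
      unfolding fac CI using U by (simp add: field_simps)
  qed
qed

end
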